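(* Let $m>1$. There is $D_0>0$ and $C>0$ such that for every real $\widehat d\ge D_0$ and all continuous $2\pi$-periodic functions $\phi,\varphi$ on $\mathbb{R}$ with $\int_0^{2\pi}\varphi=0$, the system $$\begin{cases}-(m+1)f+(f''-g')+\widehat d(f+g')=\phi & \text{on }(0,2\pi),\\ g+(f'-g)-\widehat d(f'+g'')=\varphi&\text{on }(0,2\pi),\\ f(0)=f(2\pi),\ f'(0)=f'(2\pi),\ g(0)=g(2\pi),\ g'(0)=g'(2\pi)\end{cases}$$ has a unique solution $(f,g)\in C^2([0,2\pi])^2$ with $\int_0^{2\pi}g=0$, and $$\|f\|_{C^2([0,2\pi])}+\|g\|_{C^2([0,2\pi])}\le C\big(\|\phi\|_{C^0([0,2\pi])}+\|\varphi\|_{C^0([0,2\pi])}\big).$$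
   Context: In the paper $\widehat d=-\frac{\Psi'(d)}{\Psi(d)}d$ where $d\sim m\ln K\to\infty$, so "$\widehat d$ large" corresponds to "$K$ sufficiently large"; the constant $C$ does not depend on $\widehat d$. *)

theory Defs
  imports "HOL-Analysis.Analysis"
begin

definition I2pi :: "real set" where "I2pi = {0..2*pi}"

definition C2_on :: "real set \<Rightarrow> (real \<Rightarrow> real) \<Rightarrow> bool" where
  "C2_on S f \<longleftrightarrow> (\<exists>f1 f2. (\<forall>x\<in>S. (f has_real_derivative f1 x) (at x within S)
        \<and> (f1 has_real_derivative f2 x) (at x within S)) \<and> continuous_on S f2)"

definition D1 :: "real set \<Rightarrow> (real \<Rightarrow> real) \<Rightarrow> real \<Rightarrow> real" where
  "D1 S f x = vector_derivative f (at x within S)"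

definition D2 :: "real set \<Rightarrow> (real \<Rightarrow> real) \<Rightarrow> real \<Rightarrow> real" where
  "D2 S f = D1 S (D1 S f)"

definition supnorm :: "real set \<Rightarrow> (real \<Rightarrow> real) \<Rightarrow> real" where
  "supnorm S h = (SUP x\<in>S. \<bar>h x\<bar>)"

definition C2norm :: "real set \<Rightarrow> (real \<Rightarrow> real) \<Rightarrow> real" where
  "C2norm S f = supnorm S f + supnorm S (D1 S f) + supnorm S (D2 S f)"

definition is_sol :: "real \<Rightarrow> real \<Rightarrow> (real \<Rightarrow> real) \<Rightarrow> (real \<Rightarrow> real)
    \<Rightarrow> (real \<Rightarrow> real) \<Rightarrow> (real \<Rightarrow> real) \<Rightarrow> bool" where
  "is_sol m dh phi vphi f g \<longleftrightarrow>
     C2_on I2pi f \<and> C2_on I2pi g \<and>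
     (\<forall>x\<in>{0<..<2*pi}.
        -(m+1) * f x + (D2 I2pi f x - D1 I2pi g x) + dh * (f x + D1 I2pi g x) = phi x \<and>
        g x + (D1 I2pi f x - g x) - dh * (D1 I2pi f x + D2 I2pi g x) = vphi x) \<and>
     f 0 = f (2*pi) \<and> D1 I2pi f 0 = D1 I2pi f (2*pi) \<and>
     g 0 = g (2*pi) \<and> D1 I2pi g 0 = D1 I2pi g (2*pi) \<and>
     integral I2pi g = 0"

end

theory Submission
  imports Defs
begin

lemma I2pi_iv: "I2pi = {0..2*pi}" by (simp add: I2pi_def)

lemma I2pi_ne: "I2pi \<noteq> {}" by (simp add: I2pi_def)

lemma sup_le: "(\<forall>x\<in>I2pi. \<bar>F x\<bar> \<le> B) \<Longrightarrow> supnorm I2pi F \<le> B"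
  unfolding supnorm_def by (rule cSUP_least) (auto simp: I2pi_ne)

lemma le_sup:
  assumes "continuous_on I2pi F" "x \<in> I2pi"
  shows "\<bar>F x\<bar> \<le> supnorm I2pi F"
proof -
  have c: "continuous_on I2pi (\<lambda>x. \<bar>F x\<bar>)" by (intro continuous_on_rabs assms)
  have "compact I2pi" by (simp add: I2pi_def)
  then have "compact ((\<lambda>x. \<bar>F x\<bar>) ` I2pi)"
    by (rule compact_continuous_image[OF c])
  then have "bdd_above ((\<lambda>x. \<bar>F x\<bar>) ` I2pi)"
    by (simp add: bounded_imp_bdd_above compact_imp_bounded)
  then show ?thesis unfolding supnorm_def by (rule cSUP_upper[OF assms(2)])
qed

lemma D1_eq:
  assumes "(f has_real_derivative f') (at x within I2pi)" "x \<in> I2pi"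
  shows "D1 I2pi f x = f'"
  unfolding D1_def I2pi_def
  by (rule vector_derivative_within_closed_interval)
     (use assms in \<open>auto simp: I2pi_def has_real_derivative_iff_has_vector_derivative\<close>)

lemma D2_eq:
  assumes d1: "\<forall>x\<in>I2pi. (f has_real_derivative f1 x) (at x within I2pi)"
  and d2: "\<forall>x\<in>I2pi. (f1 has_real_derivative f2 x) (at x within I2pi)"
  and x: "x \<in> I2pi"
  shows "D2 I2pi f x = f2 x"
proof -
  have e: "\<And>y. y \<in> I2pi \<Longrightarrow> f1 y = D1 I2pi f y" using d1 D1_eq by metis
  have "(D1 I2pi f has_real_derivative f2 x) (at x within I2pi)"
    by (rule has_field_derivative_transform_within[OF d2[rule_format, OF x] zero_less_one x]) (simp add: e)
  then show ?thesis unfolding D2_def using D1_eq x by blast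
qed

lemma C2_unpack:
  assumes "C2_on I2pi f"
  obtains f1 f2 where "\<forall>x\<in>I2pi. (f has_real_derivative f1 x) (at x within I2pi)"
    "\<forall>x\<in>I2pi. (f1 has_real_derivative f2 x) (at x within I2pi)"
    "continuous_on I2pi f2" "\<forall>x\<in>I2pi. D1 I2pi f x = f1 x" "\<forall>x\<in>I2pi. D2 I2pi f x = f2 x"
proof -
  obtain f1 f2 where a: "\<forall>x\<in>I2pi. (f has_real_derivative f1 x) (at x within I2pi)
        \<and> (f1 has_real_derivative f2 x) (at x within I2pi)" and c: "continuous_on I2pi f2"
    using assms unfolding C2_on_def by blast
  show ?thesis
    apply (rule that[of f1 f2])
    using a c D1_eq D2_eq[of f f1 f2] by auto
qed

lemma deriv_cont:
  assumes "\<forall>x\<in>I2pi. (f has_real_derivative f1 x) (at x within I2pi)"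
  shows "continuous_on I2pi f"
  using assms continuous_on_eq_continuous_within DERIV_continuous by blast

lemma mvt_I:
  assumes "a < b" "{a..b} \<subseteq> I2pi" "\<forall>x\<in>I2pi. (f has_real_derivative f1 x) (at x within I2pi)"
  shows "\<exists>\<xi>\<in>{a<..<b}. f b - f a = f1 \<xi> * (b - a)"
proof -
  have "\<exists>\<xi>\<in>{a<..<b}. f b - f a = (\<lambda>h. f1 \<xi> * h) (b - a)"
    apply (rule mvt_simple[OF assms(1)])
    using assms(2,3) unfolding has_field_derivative_def[symmetric]
    by (meson DERIV_subset atLeastAtMost_iff subsetD)
  then show ?thesis by simp
qed

lemma lip_I:
  assumes d: "\<forall>x\<in>I2pi. (f has_real_derivative f1 x) (at x within I2pi)"
  and b: "\<forall>x\<in>I2pi. \<bar>f1 x\<bar> \<le> B" and x: "x \<in> I2pi" and y: "y \<in> I2pi"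
  shows "\<bar>f x - f y\<bar> \<le> 2*pi*B"
proof -
  have B0: "0 \<le> B" using b I2pi_ne by force
  have key: "\<bar>f v - f u\<bar> \<le> 2*pi*B" if uv: "u < v" "u \<in> I2pi" "v \<in> I2pi" for u v
  proof -
    have "{u..v} \<subseteq> I2pi" using that by (auto simp: I2pi_def)
    then obtain \<xi> where \<xi>: "\<xi>\<in>{u<..<v}" "f v - f u = f1 \<xi> * (v - u)"
      using mvt_I[of u v f f1] uv(1) d by blast
    have "\<xi> \<in> I2pi" using \<xi>(1) that by (auto simp: I2pi_def)
    then have "\<bar>f1 \<xi>\<bar> \<le> B" using b by blast
    moreover have "v - u \<le> 2*pi" "0 \<le> v - u" using that by (auto simp: I2pi_def)
    ultimately have "\<bar>f1 \<xi>\<bar> * (v - u) \<le> B * (2*pi)" by (meson B0 mult_mono)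
    moreover have "\<bar>f v - f u\<bar> = \<bar>f1 \<xi>\<bar> * (v - u)" using \<xi>(2) uv(1) by (simp add: abs_mult)
    ultimately show ?thesis by (simp add: mult.commute)
  qed
  consider "x < y" | "x = y" | "y < x" by linarith
  then show ?thesis
  proof cases
    case 1 then show ?thesis using key[of x y] x y by (simp add: abs_minus_commute)
  next
    case 2 then show ?thesis using B0 by simp
  next
    case 3 then show ?thesis using key[of y x] x y by simp
  qed
qed

lemma rolle_I:
  assumes d: "\<forall>x\<in>I2pi. (f has_real_derivative f1 x) (at x within I2pi)" and p: "f 0 = f (2*pi)"
  shows "\<exists>\<xi>\<in>I2pi. f1 \<xi> = 0"
proof -
  obtain \<xi> where "\<xi>\<in>{0<..<2*pi}" "f (2*pi) - f 0 = f1 \<xi> * (2*pi - 0)"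
    using mvt_I[of 0 "2*pi" f f1] d by (auto simp: I2pi_def)
  then show ?thesis using p by (auto simp: I2pi_def)
qed

lemma maxp:
  fixes f f1 f2 h :: "real \<Rightarrow> real"
  assumes d1: "\<forall>x\<in>I2pi. (f has_real_derivative f1 x) (at x within I2pi)"
  and d2: "\<forall>x\<in>I2pi. (f1 has_real_derivative f2 x) (at x within I2pi)"
  and p1: "f 0 = f (2*pi)" and p2: "f1 0 = f1 (2*pi)"
  and eq: "\<forall>x\<in>I2pi. f2 x = \<mu> * f x + h x" and mu: "\<mu> > 0" and hb: "\<forall>x\<in>I2pi. \<bar>h x\<bar> \<le> H"
  shows "\<forall>x\<in>I2pi. f x \<le> H / \<mu>"
proof -
  have "compact I2pi" by (simp add: I2pi_def)
  then obtain xm where xm: "xm \<in> I2pi" "\<forall>y\<in>I2pi. f y \<le> f xm"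
    using continuous_attains_sup[of I2pi f] deriv_cont[OF d1] I2pi_ne by blast
  define x0 where "x0 = (if xm = 2*pi then 0 else xm)"
  have x0: "x0 \<in> I2pi" "x0 < 2*pi" "f x0 = f xm"
    using xm(1) p1 by (auto simp: x0_def I2pi_def)
  have mx: "\<forall>y\<in>I2pi. f y \<le> f x0" using xm x0 by simp
  have a: "\<not> f1 x0 > 0"
  proof
    assume "f1 x0 > 0"
    then obtain d where d: "d > 0" "\<forall>h>0. x0 + h \<in> I2pi \<longrightarrow> h < d \<longrightarrow> f x0 < f (x0 + h)"
      using has_real_derivative_pos_inc_right[of f "f1 x0" x0 I2pi] d1 x0(1) by blast
    define t where "t = min (d/2) ((2*pi - x0)/2)"
    have "t \<le> (2*pi - x0)/2" unfolding t_def by (rule min.cobounded2)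
    have "t \<le> d/2" unfolding t_def by (rule min.cobounded1)
    have "t > 0" unfolding t_def using d x0 by auto
    note \<open>t \<le> (2*pi - x0)/2\<close> \<open>t \<le> d/2\<close> \<open>t > 0\<close>
    then have "t > 0" "t < d" "x0 + t \<in> I2pi" using d x0 by (auto simp: I2pi_def)
    then show False using d mx by fastforce
  qed
  define x1 where "x1 = (if x0 = 0 then 2*pi else x0)"
  have x1: "x1 \<in> I2pi" "x1 > 0" "f x1 = f x0" "f1 x1 = f1 x0"
    using x0 p1 p2 by (auto simp: x1_def I2pi_def)
  have b: "\<not> f1 x0 < 0"
  proof
    assume "f1 x0 < 0"
    then obtain d where d: "d > 0" "\<forall>h>0. x1 - h \<in> I2pi \<longrightarrow> h < d \<longrightarrow> f x1 < f (x1 - h)"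
    proof -
      have "(f has_real_derivative f1 x1) (at x1 within I2pi)" using d1 x1(1) by blast
      moreover have "f1 x1 < 0" using \<open>f1 x0 < 0\<close> x1(4) by simp
      ultimately show ?thesis using has_real_derivative_neg_dec_left[of f "f1 x1" x1 I2pi] that by blast
    qed
    define t where "t = min (d/2) (x1/2)"
    have "t \<le> x1/2" unfolding t_def by (rule min.cobounded2)
    have "t \<le> d/2" unfolding t_def by (rule min.cobounded1)
    have "t > 0" unfolding t_def using d x1 by auto
    note \<open>t \<le> x1/2\<close> \<open>t \<le> d/2\<close> \<open>t > 0\<close>
    then have "t > 0" "t < d" "x1 - t \<in> I2pi" using d x1 by (auto simp: I2pi_def)
    then show False using d mx x1 by fastforce
  qed
  have z: "f1 x0 = 0" using a b by linarith
  have c: "\<not> f2 x0 > 0"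
  proof
    assume "f2 x0 > 0"
    then obtain d where d: "d > 0" "\<forall>h>0. x0 + h \<in> I2pi \<longrightarrow> h < d \<longrightarrow> f1 x0 < f1 (x0 + h)"
      using has_real_derivative_pos_inc_right[of f1 "f2 x0" x0 I2pi] d2 x0(1) by blast
    define t where "t = min (d/2) ((2*pi - x0)/2)"
    have "t \<le> (2*pi - x0)/2" unfolding t_def by (rule min.cobounded2)
    have "t \<le> d/2" unfolding t_def by (rule min.cobounded1)
    have "t > 0" unfolding t_def using d x0 by auto
    note \<open>t \<le> (2*pi - x0)/2\<close> \<open>t \<le> d/2\<close> \<open>t > 0\<close>
    then have t: "t > 0" "t < d" "x0 + t \<in> I2pi" using d x0 by (auto simp: I2pi_def)
    have "{x0..x0+t} \<subseteq> I2pi" using t x0 by (auto simp: I2pi_def)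
    then obtain \<xi> where \<xi>: "\<xi>\<in>{x0<..<x0+t}" "f (x0+t) - f x0 = f1 \<xi> * (x0 + t - x0)"
      using mvt_I[of x0 "x0+t" f f1] t d1 by auto
    have "\<xi> = x0 + (\<xi> - x0)" by simp
    moreover have "\<xi> - x0 > 0" "\<xi> - x0 < d" "x0 + (\<xi> - x0) \<in> I2pi" using \<xi>(1) t x0 by (auto simp: I2pi_def)
    ultimately have "f1 \<xi> > 0" using d z by metis
    then have "f1 \<xi> * t > 0" using t by simp
    then have "f (x0+t) > f x0" using \<xi>(2) by simp
    then show False using mx t by fastforce
  qed
  have "\<mu> * f x0 \<le> H" using eq x0(1) c hb by fastforce
  then have "f x0 \<le> H / \<mu>" using mu by (simp add: pos_le_divide_eq mult.commute)
  then show ?thesis using mx by fastforce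
qed

lemma maxp_abs:
  fixes f f1 f2 h :: "real \<Rightarrow> real"
  assumes d1: "\<forall>x\<in>I2pi. (f has_real_derivative f1 x) (at x within I2pi)"
  and d2: "\<forall>x\<in>I2pi. (f1 has_real_derivative f2 x) (at x within I2pi)"
  and p1: "f 0 = f (2*pi)" and p2: "f1 0 = f1 (2*pi)"
  and eq: "\<forall>x\<in>I2pi. f2 x = \<mu> * f x + h x" and mu: "\<mu> > 0" and hb: "\<forall>x\<in>I2pi. \<bar>h x\<bar> \<le> H"
  shows "\<forall>x\<in>I2pi. \<bar>f x\<bar> \<le> H / \<mu>"
proof -
  have u: "\<forall>x\<in>I2pi. f x \<le> H / \<mu>" by (rule maxp[OF assms])
  have "\<forall>x\<in>I2pi. (\<lambda>x. - f x) x \<le> H / \<mu>"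
  proof (rule maxp[of "\<lambda>x. - f x" "\<lambda>x. - f1 x" "\<lambda>x. - f2 x" \<mu> "\<lambda>x. - h x" H])
    show "\<forall>x\<in>I2pi. ((\<lambda>x. - f x) has_real_derivative - f1 x) (at x within I2pi)"
      using d1 by (auto intro!: DERIV_minus)
    show "\<forall>x\<in>I2pi. ((\<lambda>x. - f1 x) has_real_derivative - f2 x) (at x within I2pi)"
      using d2 by (auto intro!: DERIV_minus)
  qed (use p1 p2 eq mu hb in auto)
  then show ?thesis using u by (simp add: abs_le_iff)
qed

lemma ext_closed:
  fixes F G :: "real \<Rightarrow> real"
  assumes "continuous_on I2pi F" "continuous_on I2pi G" "\<forall>x\<in>{0<..<2*pi}. F x = G x"
  shows "\<forall>x\<in>I2pi. F x = G x"
proof -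
  have c: "continuous_on I2pi (\<lambda>x. F x - G x)" by (intro continuous_intros assms)
  have "closed {x \<in> I2pi. F x - G x = 0}"
    by (rule continuous_closed_preimage_constant[OF c]) (simp add: I2pi_def)
  moreover have "{0<..<2*pi} \<subseteq> {x \<in> I2pi. F x - G x = 0}" using assms(3) by (auto simp: I2pi_def)
  ultimately have "closure {0<..<2*pi} \<subseteq> {x \<in> I2pi. F x - G x = 0}" by (rule closure_minimal[rotated])
  then show ?thesis by (auto simp: I2pi_def)
qed

lemma int_bound:
  fixes F G :: "real \<Rightarrow> real"
  assumes "continuous_on I2pi F" "\<forall>x\<in>I2pi. \<bar>F x\<bar> \<le> B"
  shows "\<bar>integral I2pi F\<bar> \<le> B * (2*pi)"
  using integral_bound[of 0 "2*pi" F B] assms by (simp add: I2pi_def)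

lemma has_int:
  fixes F G :: "real \<Rightarrow> real"
  assumes "continuous_on I2pi F"
  shows "(F has_integral integral I2pi F) I2pi"
  using integrable_continuous_interval[of 0 "2*pi" F] assms by (simp add: I2pi_def has_integral_integral)

lemma ftc_I:
  fixes f f1 :: "real \<Rightarrow> real"
  assumes "\<forall>x\<in>I2pi. (f has_real_derivative f1 x) (at x within I2pi)" "f 0 = f (2*pi)"
  shows "(f1 has_integral 0) I2pi"
proof -
  have "(f1 has_integral (f (2*pi) - f 0)) {0..2*pi}"
    by (rule fundamental_theorem_of_calculus)
       (use assms in \<open>auto simp: I2pi_def has_real_derivative_iff_has_vector_derivative\<close>)
  then show ?thesis using assms(2) by (simp add: I2pi_def)
qed

lemma prim_I:
  fixes F G :: "real \<Rightarrow> real"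
  assumes "continuous_on I2pi F"
  shows "\<forall>x\<in>I2pi. ((\<lambda>x. integral {0..x} F) has_real_derivative F x) (at x within I2pi)"
  using integral_has_real_derivative[of 0 "2*pi" F] assms by (auto simp: I2pi_def)

lemma apriori:
  fixes m d P Q :: real and phi vphi f f1 f2 g g1 g2 :: "real \<Rightarrow> real"
  assumes m: "m > 1" and dd: "d \<ge> m + 2"
  and df1: "\<forall>x\<in>I2pi. (f has_real_derivative f1 x) (at x within I2pi)"
  and df2: "\<forall>x\<in>I2pi. (f1 has_real_derivative f2 x) (at x within I2pi)"
  and cf2: "continuous_on I2pi f2"
  and dg1: "\<forall>x\<in>I2pi. (g has_real_derivative g1 x) (at x within I2pi)"
  and dg2: "\<forall>x\<in>I2pi. (g1 has_real_derivative g2 x) (at x within I2pi)"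
  and cg2: "continuous_on I2pi g2"
  and cphi: "continuous_on I2pi phi" and cvphi: "continuous_on I2pi vphi"
  and E1: "\<forall>x\<in>{0<..<2*pi}. f2 x + (d-m-1) * f x + (d-1) * g1 x = phi x"
  and E2: "\<forall>x\<in>{0<..<2*pi}. (1-d) * f1 x - d * g2 x = vphi x"
  and pf: "f 0 = f (2*pi)" "f1 0 = f1 (2*pi)" and pg: "g 0 = g (2*pi)" "g1 0 = g1 (2*pi)"
  and ig: "integral I2pi g = 0"
  and bP: "\<forall>x\<in>I2pi. \<bar>phi x\<bar> \<le> P" and bQ: "\<forall>x\<in>I2pi. \<bar>vphi x\<bar> \<le> Q"
  and H_def: "H = (m+2)*P + 4*pi*Q"
  shows "\<forall>x\<in>I2pi. \<bar>f x\<bar> \<le> H/(m-1) \<and> \<bar>f1 x\<bar> \<le> 4*pi*H \<and> \<bar>f2 x\<bar> \<le> 2*H \<and>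
     \<bar>g x\<bar> \<le> 2*pi*(H + H/(m-1)) \<and> \<bar>g1 x\<bar> \<le> H + H/(m-1) \<and> \<bar>g2 x\<bar> \<le> 4*pi*H + Q"
proof -
  have d0: "d > 0" "d - 1 \<ge> 1" "d - m - 1 \<ge> 1" using m dd by auto
  have cf: "continuous_on I2pi f" by (rule deriv_cont[OF df1])
  have cf1: "continuous_on I2pi f1" by (rule deriv_cont[OF df2])
  have cg: "continuous_on I2pi g" by (rule deriv_cont[OF dg1])
  have cg1: "continuous_on I2pi g1" by (rule deriv_cont[OF dg2])
  have z: "0 \<in> I2pi" by (simp add: I2pi_def)
  have P0: "P \<ge> 0" using bP z by force
  have Q0: "Q \<ge> 0" using bQ z by force
  have E1c: "\<forall>x\<in>I2pi. f2 x + (d-m-1) * f x + (d-1) * g1 x = phi x"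
    by (rule ext_closed[OF _ cphi E1]) (intro continuous_intros cf cf2 cg1)
  have E2c: "\<forall>x\<in>I2pi. (1-d) * f1 x - d * g2 x = vphi x"
    by (rule ext_closed[OF _ cvphi E2]) (intro continuous_intros cf1 cg2)
  have i_f2: "(f2 has_integral 0) I2pi" by (rule ftc_I[OF df2 pf(2)])
  have i_g1: "(g1 has_integral 0) I2pi" by (rule ftc_I[OF dg1 pg(1)])
  define If where "If = integral I2pi f"
  have i_f: "(f has_integral If) I2pi" unfolding If_def by (rule has_int[OF cf])
  define Ip where "Ip = integral I2pi phi"
  have i_p: "(phi has_integral Ip) I2pi" unfolding Ip_def by (rule has_int[OF cphi])
  have "((\<lambda>x. f2 x + (d-m-1) * f x + (d-1) * g1 x) has_integral (0 + (d-m-1)*If + (d-1)*0)) I2pi"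
    by (intro has_integral_add has_integral_mult_right i_f2 i_f i_g1)
  then have hi: "((\<lambda>x. f2 x + (d-m-1) * f x + (d-1) * g1 x) has_integral ((d-m-1)*If)) I2pi" by simp
  have eqs: "\<And>x. x \<in> I2pi \<Longrightarrow> (\<lambda>x. f2 x + (d-m-1) * f x + (d-1) * g1 x) x = phi x"
    using E1c by simp
  have "(phi has_integral ((d-m-1)*If)) I2pi" by (rule has_integral_eq[OF eqs hi])
  then have IfIp: "(d-m-1) * If = Ip" using i_p has_integral_unique by blast
  have bIp: "\<bar>Ip\<bar> \<le> P * (2*pi)" unfolding Ip_def by (rule int_bound[OF cphi bP])
  define V where "V x = integral {0..x} vphi" for x
  have dV: "\<forall>x\<in>I2pi. (V has_real_derivative vphi x) (at x within I2pi)"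
    unfolding V_def[abs_def] by (rule prim_I[OF cvphi])
  have V0: "V 0 = 0" by (simp add: V_def)
  have bV: "\<forall>x\<in>I2pi. \<bar>V x\<bar> \<le> 2*pi*Q"
    using lip_I[OF dV bQ _ z] V0 by fastforce
  have cV: "continuous_on I2pi V" by (rule deriv_cont[OF dV])
  define IV where "IV = integral I2pi V"
  have i_V: "(V has_integral IV) I2pi" unfolding IV_def by (rule has_int[OF cV])
  have bIV: "\<bar>IV\<bar> \<le> 2*pi*Q * (2*pi)" unfolding IV_def by (rule int_bound[OF cV bV])
  define a where "a = (d-1)/d"
  define b where "b = 1/d"
  have ab: "0 \<le> a" "a \<le> 1" "0 < b" "b \<le> 1" "(d-1)*b = a" using d0 by (auto simp: a_def b_def)
  have "\<exists>c. \<forall>x\<in>I2pi. g1 x + a * f x + b * V x = c"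
  proof (rule has_field_derivative_zero_constant)
    show "convex I2pi" by (simp add: I2pi_def)
    fix x assume x: "x \<in> I2pi"
    have "((\<lambda>x. g1 x + a * f x + b * V x) has_real_derivative (g2 x + a * f1 x + b * vphi x))
       (at x within I2pi)"
      using x dg2 df1 dV by (intro DERIV_add DERIV_cmult) auto
    moreover have "g2 x + a * f1 x + b * vphi x = 0"
    proof -
      have "vphi x = (1-d) * f1 x - d * g2 x" using E2c x by simp
      then show ?thesis using d0 by (simp add: a_def b_def field_simps)
    qed
    ultimately show "((\<lambda>x. g1 x + a * f x + b * V x) has_real_derivative 0) (at x within I2pi)" by simp
  qed
  then obtain c where c: "\<forall>x\<in>I2pi. g1 x + a * f x + b * V x = c" by blast
  have g1c: "\<forall>x\<in>I2pi. g1 x = c - a * f x - b * V x" using c by fastforce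
  have hc: "((\<lambda>x. c - a * f x - b * V x) has_integral (c * (2*pi) - a * If - b * IV)) I2pi"
  proof -
    have "((\<lambda>x. c) has_integral (c * (2*pi))) I2pi"
      using has_integral_const_real[of c 0 "2*pi"] by (simp add: I2pi_def mult.commute)
    then show ?thesis by (intro has_integral_diff has_integral_mult_right i_f i_V)
  qed
  then have "(g1 has_integral (c * (2*pi) - a * If - b * IV)) I2pi"
  proof -
    have e: "\<And>x. x \<in> I2pi \<Longrightarrow> (\<lambda>x. c - a * f x - b * V x) x = g1 x" using g1c by simp
    show ?thesis by (rule has_integral_eq[OF e hc])
  qed
  then have "c * (2*pi) - a * If - b * IV = 0" using has_integral_unique i_g1 by blast
  then have cI: "c * (2*pi) = a * If + b * IV" by simp
  define \<mu> where "\<mu> = m - 1 + 1/d"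
  have "1/d > 0" using d0 by simp
  then have mu: "\<mu> \<ge> m - 1" "\<mu> > 0" using m unfolding \<mu>_def by linarith+
  have mid: "(d-m-1) - (d-1)*a = - \<mu>" using d0 by (simp add: a_def \<mu>_def field_simps)
  define h where "h x = phi x - (d-1)*c + a * V x" for x
  have eqf: "\<forall>x\<in>I2pi. f2 x = \<mu> * f x + h x"
  proof
    fix x assume x: "x \<in> I2pi"
    have "f2 x = phi x - (d-m-1) * f x - (d-1) * (c - a * f x - b * V x)"
    proof -
      have e1: "f2 x + (d-m-1) * f x + (d-1) * g1 x = phi x" using E1c x by blast
      have e2: "g1 x = c - a * f x - b * V x" using g1c x by blast
      have "f2 x = phi x - (d-m-1) * f x - (d-1) * g1 x" using e1 by linarith
      then show ?thesis unfolding e2 .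
    qed
    also have "\<dots> = - ((d-m-1) - (d-1)*a) * f x + phi x - (d-1)*c + ((d-1)*b) * V x"
      by (simp add: algebra_simps)
    also have "\<dots> = \<mu> * f x + h x" using mid ab(5) by (simp add: h_def)
    finally show "f2 x = \<mu> * f x + h x" .
  qed
  have r: "0 \<le> (d-1)/(d-m-1)" "(d-1)/(d-m-1) \<le> m+1"
  proof -
    show "0 \<le> (d-1)/(d-m-1)" using d0 by simp
    have "d - 1 \<le> (m+1)*(d-m-1)"
    proof -
      have "m * (m+2) \<le> m * d" using dd m by (intro mult_left_mono) auto
      then show ?thesis by (simp add: algebra_simps)
    qed
    then show "(d-1)/(d-m-1) \<le> m+1" using d0 by (simp add: divide_le_eq)
  qed
  have dc: "(d-1)*c*(2*pi) = a * ((d-1)/(d-m-1)) * Ip + a * IV"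
  proof -
    have "(d-1)*c*(2*pi) = (d-1)*(c*(2*pi))" by simp
    also have "\<dots> = (d-1)*(a*If + b*IV)" using cI by simp
    also have "\<dots> = (d-1) * (a * If) + ((d-1)*b) * IV" by (simp add: algebra_simps)
    finally have e1: "(d-1)*c*(2*pi) = (d-1) * (a * If) + ((d-1)*b) * IV" .
    have "d - m - 1 \<noteq> 0" using d0 by simp
    then have "If = Ip / (d-m-1)" using IfIp by (simp add: eq_divide_eq mult.commute)
    then have "(d-1) * (a * If) = a * ((d-1)/(d-m-1)) * Ip" by simp
    then show ?thesis using e1 ab(5) by simp
  qed
  have "\<bar>a * ((d-1)/(d-m-1)) * Ip\<bar> \<le> 1 * (m+1) * (P * (2*pi))"
    unfolding abs_mult abs_of_nonneg[OF r(1)] abs_of_nonneg[OF ab(1)]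
    using ab r bIp m by (intro mult_mono) auto
  moreover have "\<bar>a * IV\<bar> \<le> 1 * (2*pi*Q * (2*pi))"
    unfolding abs_mult using ab bIV by (intro mult_mono) auto
  ultimately have "\<bar>(d-1)*c*(2*pi)\<bar> \<le> (m+1) * (P * (2*pi)) + 2*pi*Q * (2*pi)"
    unfolding dc by linarith
  also have "\<dots> = ((m+1)*P + 2*pi*Q) * (2*pi)" by (simp add: algebra_simps)
  finally have "\<bar>(d-1)*c*(2*pi)\<bar> \<le> ((m+1)*P + 2*pi*Q) * (2*pi)" .
  then have bdc: "\<bar>(d-1)*c\<bar> \<le> (m+1)*P + 2*pi*Q"
    by (simp add: abs_mult)
  have bc: "\<bar>c\<bar> \<le> (m+1)*P + 2*pi*Q"
  proof -
    have "\<bar>c\<bar> \<le> (d-1) * \<bar>c\<bar>" using d0 by (simp add: mult_le_cancel_right1)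
    then show ?thesis using bdc d0 by (simp add: abs_mult)
  qed
  have bh: "\<forall>x\<in>I2pi. \<bar>h x\<bar> \<le> H"
  proof
    fix x assume x: "x \<in> I2pi"
    have "\<bar>a * V x\<bar> \<le> 1 * (2*pi*Q)" unfolding abs_mult using ab bV x by (intro mult_mono) auto
    moreover have "\<bar>h x\<bar> \<le> \<bar>phi x\<bar> + \<bar>(d-1)*c\<bar> + \<bar>a * V x\<bar>" unfolding h_def by linarith
    moreover have "\<bar>phi x\<bar> \<le> P" using bP x by blast
    moreover have "(m+2)*P + 4*pi*Q = ((m+1)*P + 2*pi*Q) + P + 2*pi*Q" by (simp add: algebra_simps)
    ultimately show "\<bar>h x\<bar> \<le> H" using bdc unfolding H_def by linarith
  qed
  have H0: "H \<ge> 0" unfolding H_def using P0 Q0 m by simp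
  have bf0: "\<forall>x\<in>I2pi. \<bar>f x\<bar> \<le> H/\<mu>" by (rule maxp_abs[OF df1 df2 pf eqf mu(2) bh])
  have Hmu: "H/\<mu> \<le> H/(m-1)" using H0 mu m by (intro divide_left_mono) auto
  have bf: "\<forall>x\<in>I2pi. \<bar>f x\<bar> \<le> H/(m-1)" using bf0 Hmu by fastforce
  have bf2: "\<forall>x\<in>I2pi. \<bar>f2 x\<bar> \<le> 2*H"
  proof
    fix x assume x: "x \<in> I2pi"
    have "\<mu> * \<bar>f x\<bar> \<le> H" using bf0 x mu by (simp add: pos_le_divide_eq mult.commute)
    then have "\<bar>\<mu> * f x\<bar> \<le> H" using mu by (simp add: abs_mult)
    moreover have "f2 x = \<mu> * f x + h x" "\<bar>h x\<bar> \<le> H" using eqf bh x by auto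
    ultimately show "\<bar>f2 x\<bar> \<le> 2*H" by linarith
  qed
  obtain \<xi> where \<xi>: "\<xi> \<in> I2pi" "f1 \<xi> = 0" using rolle_I[OF df1 pf(1)] by blast
  have bf1: "\<forall>x\<in>I2pi. \<bar>f1 x\<bar> \<le> 4*pi*H"
    using lip_I[OF df2 bf2 _ \<xi>(1)] \<xi>(2) by fastforce
  have bg1: "\<forall>x\<in>I2pi. \<bar>g1 x\<bar> \<le> H + H/(m-1)"
  proof
    fix x assume x: "x \<in> I2pi"
    have "\<bar>a * f x\<bar> \<le> 1 * (H/(m-1))" unfolding abs_mult using ab bf x by (intro mult_mono) auto
    moreover have "\<bar>b * V x\<bar> \<le> 1 * (2*pi*Q)" unfolding abs_mult using ab bV x by (intro mult_mono) auto
    moreover have "g1 x = c - a * f x - b * V x" using g1c x by blast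
    moreover have "0 \<le> pi" by simp
    moreover have "(m+1)*P + 2*pi*Q + 2*pi*Q \<le> H" using P0 unfolding H_def by (simp add: algebra_simps)
    ultimately show "\<bar>g1 x\<bar> \<le> H + H/(m-1)" using bc by linarith
  qed
  define G where "G x = integral {0..x} g" for x
  have dG: "\<forall>x\<in>I2pi. (G has_real_derivative g x) (at x within I2pi)"
    unfolding G_def[abs_def] by (rule prim_I[OF cg])
  have "G 0 = G (2*pi)" using ig by (simp add: G_def I2pi_def)
  then obtain \<eta> where \<eta>: "\<eta> \<in> I2pi" "g \<eta> = 0" using rolle_I[OF dG] by blast
  have bg: "\<forall>x\<in>I2pi. \<bar>g x\<bar> \<le> 2*pi*(H + H/(m-1))"
    using lip_I[OF dg1 bg1 _ \<eta>(1)] \<eta>(2) by fastforce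
  have bg2: "\<forall>x\<in>I2pi. \<bar>g2 x\<bar> \<le> 4*pi*H + Q"
  proof
    fix x assume x: "x \<in> I2pi"
    have e: "vphi x = (1-d) * f1 x - d * g2 x" using E2c x by simp
    have "g2 x = - a * f1 x - b * vphi x" unfolding e using d0 by (simp add: a_def b_def field_simps)
    moreover have "\<bar>a * f1 x\<bar> \<le> 1 * (4*pi*H)" unfolding abs_mult using ab bf1 x by (intro mult_mono) auto
    moreover have "\<bar>b * vphi x\<bar> \<le> 1 * Q" unfolding abs_mult using ab bQ x by (intro mult_mono) auto
    ultimately show "\<bar>g2 x\<bar> \<le> 4*pi*H + Q" by linarith
  qed
  show ?thesis using bf bf1 bf2 bg bg1 bg2 by blast
qed

lemma per_sol:
  fixes h :: "real \<Rightarrow> real" and \<mu> :: real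
  assumes mu: "\<mu> > 0" and ch: "continuous_on I2pi h"
  shows "\<exists>f f1. (\<forall>x\<in>I2pi. (f has_real_derivative f1 x) (at x within I2pi)) \<and>
     (\<forall>x\<in>I2pi. (f1 has_real_derivative \<mu> * f x + h x) (at x within I2pi)) \<and>
     f 0 = f (2*pi) \<and> f1 0 = f1 (2*pi)"
proof -
  define s where "s = sqrt \<mu>"
  have s: "s > 0" "s * s = \<mu>" using mu by (auto simp: s_def)
  define u where "u y = exp (- s * y) * h y" for y
  define v where "v y = exp (s * y) * h y" for y
  have cu: "continuous_on I2pi u" unfolding u_def by (intro continuous_intros ch)
  have cv: "continuous_on I2pi v" unfolding v_def by (intro continuous_intros ch)
  define p where "p = (1/(2* s)) * integral {0..2*pi} u"
  define q where "q = - (1/(2* s)) * integral {0..2*pi} v"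
  define E where "E = exp (2*pi* s)"
  have E: "E > 1" using s by (simp add: E_def)
  define \<alpha> where "\<alpha> = E * p / (1 - E)"
  define \<beta> where "\<beta> = (1/E) * q / (1 - 1/E)"
  have al: "E * (\<alpha> + p) = \<alpha>" using E by (simp add: \<alpha>_def field_simps)
  have be: "(1/E) * (\<beta> + q) = \<beta>" using E by (simp add: \<beta>_def field_simps)
  define P where "P x = \<alpha> + (1/(2* s)) * integral {0..x} u" for x
  define Q where "Q x = \<beta> - (1/(2* s)) * integral {0..x} v" for x
  have dP: "\<forall>x\<in>I2pi. (P has_real_derivative (1/(2* s)) * u x) (at x within I2pi)"
    using prim_I[OF cu] s unfolding P_def by (auto intro!: derivative_eq_intros)
  have dQ: "\<forall>x\<in>I2pi. (Q has_real_derivative - ((1/(2* s)) * v x)) (at x within I2pi)"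
    using prim_I[OF cv] s unfolding Q_def by (auto intro!: derivative_eq_intros)
  define f where "f x = exp (s*x) * P x + exp (- s*x) * Q x" for x
  define f1 where "f1 x = s * (exp (s*x) * P x) - s * (exp (- s*x) * Q x)" for x
  have Da: "((\<lambda>x. exp (s*x) * P x) has_real_derivative (s * exp (s*x) * P x + exp (s*x) * ((1/(2 * s)) * u x))) (at x within I2pi)"
    if x: "x \<in> I2pi" for x
    using dP x by (intro derivative_eq_intros) auto
  have Db: "((\<lambda>x. exp (- s*x) * Q x) has_real_derivative ((- s) * exp (- s*x) * Q x + exp (- s*x) * (- ((1/(2 * s)) * v x)))) (at x within I2pi)"
    if x: "x \<in> I2pi" for x
    using dQ x by (intro derivative_eq_intros) auto
  have ee: "exp (s*x) * exp (- s*x) = 1" for x by (simp add: exp_minus field_simps)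
  have d1: "\<forall>x\<in>I2pi. (f has_real_derivative f1 x) (at x within I2pi)"
  proof
    fix x assume x: "x \<in> I2pi"
    have D: "(f has_real_derivative
      (s * exp (s*x) * P x + exp (s*x) * ((1/(2 * s)) * u x)) + ((- s) * exp (- s*x) * Q x + exp (- s*x) * (- ((1/(2 * s)) * v x))))
      (at x within I2pi)"
      unfolding f_def[abs_def]
      using dP dQ x
      by (intro derivative_eq_intros) auto
    have "(s * exp (s*x) * P x + exp (s*x) * ((1/(2 * s)) * u x)) + ((- s) * exp (- s*x) * Q x + exp (- s*x) * (- ((1/(2 * s)) * v x)))
       = f1 x"
      unfolding f1_def u_def v_def using s by (simp add: field_simps exp_minus)
    then show "(f has_real_derivative f1 x) (at x within I2pi)" using D by simp
  qed
  have d2: "\<forall>x\<in>I2pi. (f1 has_real_derivative \<mu> * f x + h x) (at x within I2pi)"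
  proof
    fix x assume x: "x \<in> I2pi"
    have D: "(f1 has_real_derivative
      (s * (s * exp (s*x) * P x + exp (s*x) * ((1/(2 * s)) * u x))) - (s * ((- s) * exp (- s*x) * Q x + exp (- s*x) * (- ((1/(2 * s)) * v x)))))
      (at x within I2pi)"
      unfolding f1_def[abs_def]
      by (intro DERIV_diff DERIV_cmult Da Db x)
    have "(s * (s * exp (s*x) * P x + exp (s*x) * ((1/(2 * s)) * u x))) - (s * ((- s) * exp (- s*x) * Q x + exp (- s*x) * (- ((1/(2 * s)) * v x))))
       = \<mu> * f x + h x"
      unfolding f_def u_def v_def s(2)[symmetric] using s(1) by (simp add: field_simps exp_minus)
    then show "(f1 has_real_derivative \<mu> * f x + h x) (at x within I2pi)" using D by simp
  qed
  have P0: "P 0 = \<alpha>" "Q 0 = \<beta>" by (simp_all add: P_def Q_def)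
  have P2: "P (2*pi) = \<alpha> + p" "Q (2*pi) = \<beta> + q" by (simp_all add: P_def Q_def p_def q_def)
  have e2: "exp (s*(2*pi)) = E" "exp (- s*(2*pi)) = 1/E" by (simp_all add: E_def exp_minus mult.commute inverse_eq_divide)
  have "f (2*pi) = \<alpha> + \<beta>" unfolding f_def P2 e2 using al be by simp
  moreover have "f 0 = \<alpha> + \<beta>" unfolding f_def P0 by simp
  moreover have "f1 (2*pi) = s * \<alpha> - s * \<beta>" unfolding f1_def P2 e2 using al be
    by (metis mult.assoc)
  moreover have "f1 0 = s * \<alpha> - s * \<beta>" unfolding f1_def P0 by simp
  ultimately show ?thesis using d1 d2 by metis
qed

lemma unpack:
  assumes "is_sol m d phi vphi f g"
  obtains f1 f2 g1 g2 where
   "\<forall>x\<in>I2pi. (f has_real_derivative f1 x) (at x within I2pi)"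
   "\<forall>x\<in>I2pi. (f1 has_real_derivative f2 x) (at x within I2pi)"
   "continuous_on I2pi f2"
   "\<forall>x\<in>I2pi. (g has_real_derivative g1 x) (at x within I2pi)"
   "\<forall>x\<in>I2pi. (g1 has_real_derivative g2 x) (at x within I2pi)"
   "continuous_on I2pi g2"
   "\<forall>x\<in>{0<..<2*pi}. f2 x + (d-m-1) * f x + (d-1) * g1 x = phi x"
   "\<forall>x\<in>{0<..<2*pi}. (1-d) * f1 x - d * g2 x = vphi x"
   "f 0 = f (2*pi)" "f1 0 = f1 (2*pi)" "g 0 = g (2*pi)" "g1 0 = g1 (2*pi)"
   "integral I2pi g = 0"
   "\<forall>x\<in>I2pi. D1 I2pi f x = f1 x" "\<forall>x\<in>I2pi. D2 I2pi f x = f2 x"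
   "\<forall>x\<in>I2pi. D1 I2pi g x = g1 x" "\<forall>x\<in>I2pi. D2 I2pi g x = g2 x"
proof -
  have s: "C2_on I2pi f" "C2_on I2pi g"
    and eqs: "\<forall>x\<in>{0<..<2*pi}.
        -(m+1) * f x + (D2 I2pi f x - D1 I2pi g x) + d * (f x + D1 I2pi g x) = phi x \<and>
        g x + (D1 I2pi f x - g x) - d * (D1 I2pi f x + D2 I2pi g x) = vphi x"
    and p: "f 0 = f (2*pi)" "D1 I2pi f 0 = D1 I2pi f (2*pi)"
     "g 0 = g (2*pi)" "D1 I2pi g 0 = D1 I2pi g (2*pi)" "integral I2pi g = 0"
    using assms unfolding is_sol_def by auto
  obtain f1 f2 where f: "\<forall>x\<in>I2pi. (f has_real_derivative f1 x) (at x within I2pi)"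
    "\<forall>x\<in>I2pi. (f1 has_real_derivative f2 x) (at x within I2pi)"
    "continuous_on I2pi f2" "\<forall>x\<in>I2pi. D1 I2pi f x = f1 x" "\<forall>x\<in>I2pi. D2 I2pi f x = f2 x"
    using C2_unpack[OF s(1)] by blast
  obtain g1 g2 where g: "\<forall>x\<in>I2pi. (g has_real_derivative g1 x) (at x within I2pi)"
    "\<forall>x\<in>I2pi. (g1 has_real_derivative g2 x) (at x within I2pi)"
    "continuous_on I2pi g2" "\<forall>x\<in>I2pi. D1 I2pi g x = g1 x" "\<forall>x\<in>I2pi. D2 I2pi g x = g2 x"
    using C2_unpack[OF s(2)] by blast
  have ends: "0 \<in> I2pi" "2*pi \<in> I2pi" by (auto simp: I2pi_def)
  have sub: "\<And>x. x \<in> {0<..<2*pi} \<Longrightarrow> x \<in> I2pi" by (auto simp: I2pi_def)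
  show ?thesis
  proof (rule that[OF f(1,2,3) g(1,2,3) _ _ p(1) _ p(3) _ p(5) f(4,5) g(4,5)])
    show "\<forall>x\<in>{0<..<2*pi}. f2 x + (d-m-1) * f x + (d-1) * g1 x = phi x"
    proof
      fix x assume x: "x \<in> {0<..<2*pi}"
      have e: "-(m+1) * f x + (D2 I2pi f x - D1 I2pi g x) + d * (f x + D1 I2pi g x) = phi x"
        using eqs x by blast
      have "D2 I2pi f x = f2 x" "D1 I2pi g x = g1 x" using f(5) g(4) sub[OF x] by auto
      then have "-(m+1) * f x + (f2 x - g1 x) + d * (f x + g1 x) = phi x" using e by simp
      moreover have "f2 x + (d-m-1) * f x + (d-1) * g1 x = -(m+1) * f x + (f2 x - g1 x) + d * (f x + g1 x)"
        by (simp add: algebra_simps)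
      ultimately show "f2 x + (d-m-1) * f x + (d-1) * g1 x = phi x" by simp
    qed
    show "\<forall>x\<in>{0<..<2*pi}. (1-d) * f1 x - d * g2 x = vphi x"
    proof
      fix x assume x: "x \<in> {0<..<2*pi}"
      have e: "g x + (D1 I2pi f x - g x) - d * (D1 I2pi f x + D2 I2pi g x) = vphi x"
        using eqs x by blast
      have "D1 I2pi f x = f1 x" "D2 I2pi g x = g2 x" using f(4) g(5) sub[OF x] by auto
      then have "g x + (f1 x - g x) - d * (f1 x + g2 x) = vphi x" using e by simp
      moreover have "(1-d) * f1 x - d * g2 x = g x + (f1 x - g x) - d * (f1 x + g2 x)"
        by (simp add: algebra_simps)
      ultimately show "(1-d) * f1 x - d * g2 x = vphi x" by simp
    qed
    show "f1 0 = f1 (2*pi)" using p(2) f(4) ends by simp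
    show "g1 0 = g1 (2*pi)" using p(4) g(4) ends by simp
  qed
qed

lemma existence:
  fixes m d :: real and phi vphi :: "real \<Rightarrow> real"
  assumes m: "m > 1" and dd: "d \<ge> m + 2"
  and cphi: "continuous_on I2pi phi" and cvphi: "continuous_on I2pi vphi"
  and iv: "integral I2pi vphi = 0"
  shows "\<exists>f g. is_sol m d phi vphi f g"
proof -
  have d0: "d > 0" "d - 1 \<ge> 1" "d - m - 1 \<ge> 1" using m dd by auto
  define a where "a = (d-1)/d"
  define b where "b = 1/d"
  define \<mu> where "\<mu> = m - 1 + 1/d"
  have "1/d > 0" using d0 by simp
  then have mu: "\<mu> > 0" using m unfolding \<mu>_def by linarith
  have mid: "(d-m-1) - (d-1)*a = - \<mu>" using d0 by (simp add: a_def \<mu>_def field_simps)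
  have ab5: "(d-1)*b = a" using d0 by (simp add: a_def b_def)
  define V where "V x = integral {0..x} vphi" for x
  have dV: "\<forall>x\<in>I2pi. (V has_real_derivative vphi x) (at x within I2pi)"
    unfolding V_def[abs_def] by (rule prim_I[OF cvphi])
  have cV: "continuous_on I2pi V" by (rule deriv_cont[OF dV])
  have V0: "V 0 = 0" "V (2*pi) = 0" using iv by (simp_all add: V_def I2pi_def)
  define IV where "IV = integral I2pi V"
  have i_V: "(V has_integral IV) I2pi" unfolding IV_def by (rule has_int[OF cV])
  define Ip where "Ip = integral I2pi phi"
  have i_p: "(phi has_integral Ip) I2pi" unfolding Ip_def by (rule has_int[OF cphi])
  define J where "J = Ip / (d-m-1)"
  have JIp: "(d-m-1) * J = Ip" using d0 by (simp add: J_def)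
  define c0 where "c0 = (a * J + b * IV) / (2*pi)"
  have c0: "c0 * (2*pi) = a * J + b * IV" by (simp add: c0_def)
  define h where "h x = phi x - (d-1)*c0 + a * V x" for x
  have ch: "continuous_on I2pi h" unfolding h_def by (intro continuous_intros cphi cV)
  obtain f f1 where df1: "\<forall>x\<in>I2pi. (f has_real_derivative f1 x) (at x within I2pi)"
    and df2: "\<forall>x\<in>I2pi. (f1 has_real_derivative \<mu> * f x + h x) (at x within I2pi)"
    and pf: "f 0 = f (2*pi)" "f1 0 = f1 (2*pi)"
    using per_sol[OF mu ch] by blast
  define f2 where "f2 x = \<mu> * f x + h x" for x
  have df2': "\<forall>x\<in>I2pi. (f1 has_real_derivative f2 x) (at x within I2pi)" using df2 by (simp add: f2_def)
  have cf: "continuous_on I2pi f" by (rule deriv_cont[OF df1])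
  have cf1: "continuous_on I2pi f1" by (rule deriv_cont[OF df2])
  have cf2: "continuous_on I2pi f2" unfolding f2_def by (intro continuous_intros cf ch)
  define g1 where "g1 x = c0 - a * f x - b * V x" for x
  have cg1: "continuous_on I2pi g1" unfolding g1_def by (intro continuous_intros cf cV)
  define g2 where "g2 x = - a * f1 x - b * vphi x" for x
  have cg2: "continuous_on I2pi g2" unfolding g2_def by (intro continuous_intros cf1 cvphi)
  have dg2: "\<forall>x\<in>I2pi. (g1 has_real_derivative g2 x) (at x within I2pi)"
  proof
    fix x assume x: "x \<in> I2pi"
    have "((\<lambda>x. c0 - a * f x - b * V x) has_real_derivative (0 - a * f1 x - b * vphi x)) (at x within I2pi)"
      using df1 dV x by (intro DERIV_diff DERIV_cmult DERIV_const) auto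
    then show "(g1 has_real_derivative g2 x) (at x within I2pi)"
      unfolding g1_def[abs_def] g2_def by simp
  qed
  define G where "G x = integral {0..x} g1" for x
  have dG: "\<forall>x\<in>I2pi. (G has_real_derivative g1 x) (at x within I2pi)"
    unfolding G_def[abs_def] by (rule prim_I[OF cg1])
  have cG: "continuous_on I2pi G" by (rule deriv_cont[OF dG])
  define k where "k = integral I2pi G / (2*pi)"
  define g where "g x = G x - k" for x
  have dg1: "\<forall>x\<in>I2pi. (g has_real_derivative g1 x) (at x within I2pi)"
  proof
    fix x assume x: "x \<in> I2pi"
    have "((\<lambda>x. G x - k) has_real_derivative (g1 x - 0)) (at x within I2pi)"
      using dG x by (intro DERIV_diff DERIV_const) auto
    then show "(g has_real_derivative g1 x) (at x within I2pi)" unfolding g_def[abs_def] by simp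
  qed
  define If where "If = integral I2pi f"
  have i_f: "(f has_integral If) I2pi" unfolding If_def by (rule has_int[OF cf])
  have i_f2: "(f2 has_integral 0) I2pi" by (rule ftc_I[OF df2' pf(2)])
  have "((\<lambda>x. \<mu> * f x + (phi x - (d-1)*c0 + a * V x)) has_integral
     (\<mu> * If + (Ip - (2*pi) * ((d-1)*c0) + a * IV))) I2pi"
  proof -
    have "((\<lambda>x. (d-1)*c0) has_integral ((2*pi) * ((d-1)*c0))) I2pi"
      using has_integral_const_real[of "(d-1)*c0" 0 "2*pi"] by (simp add: I2pi_def)
    then show ?thesis by (intro has_integral_add has_integral_diff has_integral_mult_right i_f i_p i_V)
  qed
  then have "(f2 has_integral (\<mu> * If + (Ip - (2*pi) * ((d-1)*c0) + a * IV))) I2pi"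
    unfolding f2_def[abs_def] h_def by simp
  then have e0: "\<mu> * If + (Ip - (2*pi) * ((d-1)*c0) + a * IV) = 0" using has_integral_unique i_f2 by blast
  have "(2*pi) * ((d-1)*c0) = (d-1) * a * J + a * IV"
  proof -
    have "(2*pi) * ((d-1)*c0) = (d-1) * (c0 * (2*pi))" by simp
    also have "\<dots> = (d-1) * a * J + ((d-1)*b) * IV" unfolding c0 by (simp add: algebra_simps)
    finally show ?thesis unfolding ab5 .
  qed
  then have "\<mu> * If + ((d-m-1) * J - (d-1) * a * J) = 0" using e0 JIp by linarith
  then have "\<mu> * If + ((d-m-1) - (d-1) * a) * J = 0" by (simp add: algebra_simps)
  then have "\<mu> * (If - J) = 0" unfolding mid by (simp add: algebra_simps)
  then have IfJ: "If = J" using mu by simp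
  have i_g1: "(g1 has_integral 0) I2pi"
  proof -
    have "((\<lambda>x. c0) has_integral (c0 * (2*pi))) I2pi"
      using has_integral_const_real[of c0 0 "2*pi"] by (simp add: I2pi_def mult.commute)
    then have "((\<lambda>x. c0 - a * f x - b * V x) has_integral (c0 * (2*pi) - a * If - b * IV)) I2pi"
      by (intro has_integral_diff has_integral_mult_right i_f i_V)
    then show ?thesis unfolding c0 IfJ g1_def[abs_def] by simp
  qed
  have G2: "G 0 = 0" "G (2*pi) = 0" using i_g1 by (auto simp: G_def I2pi_def)
  have pg: "g 0 = g (2*pi)" by (simp add: g_def G2)
  have pg1: "g1 0 = g1 (2*pi)" by (simp add: g1_def pf(1) V0)
  have ig: "integral I2pi g = 0"
  proof -
    have "((\<lambda>x. G x - k) has_integral (integral I2pi G - (2*pi) * k)) I2pi"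
    proof -
      have "((\<lambda>x. k) has_integral ((2*pi) * k)) I2pi"
        using has_integral_const_real[of k 0 "2*pi"] by (simp add: I2pi_def)
      then show ?thesis by (intro has_integral_diff has_int[OF cG])
    qed
    then show ?thesis unfolding g_def[abs_def] k_def by (auto simp: integral_unique)
  qed
  have Df: "\<forall>x\<in>I2pi. D1 I2pi f x = f1 x" "\<forall>x\<in>I2pi. D2 I2pi f x = f2 x"
    using df1 df2' D1_eq D2_eq[OF df1 df2'] by auto
  have Dg: "\<forall>x\<in>I2pi. D1 I2pi g x = g1 x" "\<forall>x\<in>I2pi. D2 I2pi g x = g2 x"
    using dg1 dg2 D1_eq D2_eq[OF dg1 dg2] by auto
  have C2f: "C2_on I2pi f" unfolding C2_on_def using df1 df2' cf2 by blast
  have C2g: "C2_on I2pi g" unfolding C2_on_def using dg1 dg2 cg2 by blast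
  have ends: "0 \<in> I2pi" "2*pi \<in> I2pi" by (auto simp: I2pi_def)
  have sub: "\<And>x. x \<in> {0<..<2*pi} \<Longrightarrow> x \<in> I2pi" by (auto simp: I2pi_def)
  have eq1: "-(m+1) * f x + (f2 x - g1 x) + d * (f x + g1 x) = phi x" for x
    unfolding f2_def g1_def h_def a_def b_def \<mu>_def using d0 by (simp add: field_simps)
  have eq2: "g x + (f1 x - g x) - d * (f1 x + g2 x) = vphi x" for x
    unfolding g2_def a_def b_def using d0 by (simp add: field_simps)
  have "is_sol m d phi vphi f g"
    unfolding is_sol_def
    using C2f C2g eq1 eq2 Df Dg sub pf pg pg1 ig ends by auto
  then show ?thesis by blast
qed

lemma estimate:
  fixes m d :: real and phi vphi f g :: "real \<Rightarrow> real"
  assumes m: "m > 1" and dd: "d \<ge> m + 2"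
  and cphi: "continuous_on I2pi phi" and cvphi: "continuous_on I2pi vphi"
  and sol: "is_sol m d phi vphi f g"
  shows "C2norm I2pi f + C2norm I2pi g \<le>
     ((m + 2 + 4*pi) * ((2 + 2*pi)/(m-1) + 10*pi + 4)) * (supnorm I2pi phi + supnorm I2pi vphi)"
proof -
  obtain f1 f2 g1 g2 where
   df1: "\<forall>x\<in>I2pi. (f has_real_derivative f1 x) (at x within I2pi)"
   and df2: "\<forall>x\<in>I2pi. (f1 has_real_derivative f2 x) (at x within I2pi)"
   and cf2: "continuous_on I2pi f2"
   and dg1: "\<forall>x\<in>I2pi. (g has_real_derivative g1 x) (at x within I2pi)"
   and dg2: "\<forall>x\<in>I2pi. (g1 has_real_derivative g2 x) (at x within I2pi)"
   and cg2: "continuous_on I2pi g2"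
   and E1: "\<forall>x\<in>{0<..<2*pi}. f2 x + (d-m-1) * f x + (d-1) * g1 x = phi x"
   and E2: "\<forall>x\<in>{0<..<2*pi}. (1-d) * f1 x - d * g2 x = vphi x"
   and pf: "f 0 = f (2*pi)" "f1 0 = f1 (2*pi)" and pg: "g 0 = g (2*pi)" "g1 0 = g1 (2*pi)"
   and ig: "integral I2pi g = 0"
   and Df: "\<forall>x\<in>I2pi. D1 I2pi f x = f1 x" "\<forall>x\<in>I2pi. D2 I2pi f x = f2 x"
   and Dg: "\<forall>x\<in>I2pi. D1 I2pi g x = g1 x" "\<forall>x\<in>I2pi. D2 I2pi g x = g2 x"
    using unpack[OF sol] by blast
  define P where "P = supnorm I2pi phi"
  define Q where "Q = supnorm I2pi vphi"
  have bP: "\<forall>x\<in>I2pi. \<bar>phi x\<bar> \<le> P" unfolding P_def using le_sup[OF cphi] by blast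
  have bQ: "\<forall>x\<in>I2pi. \<bar>vphi x\<bar> \<le> Q" unfolding Q_def using le_sup[OF cvphi] by blast
  have z: "0 \<in> I2pi" by (simp add: I2pi_def)
  have P0: "P \<ge> 0" using bP z by force
  have Q0: "Q \<ge> 0" using bQ z by force
  define H where "H = (m+2)*P + 4*pi*Q"
  have B: "\<forall>x\<in>I2pi. \<bar>f x\<bar> \<le> H/(m-1) \<and> \<bar>f1 x\<bar> \<le> 4*pi*H \<and> \<bar>f2 x\<bar> \<le> 2*H \<and>
     \<bar>g x\<bar> \<le> 2*pi*(H + H/(m-1)) \<and> \<bar>g1 x\<bar> \<le> H + H/(m-1) \<and> \<bar>g2 x\<bar> \<le> 4*pi*H + Q"
    by (rule apriori[OF m dd df1 df2 cf2 dg1 dg2 cg2 cphi cvphi E1 E2 pf pg ig bP bQ H_def])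
  have s1: "supnorm I2pi f \<le> H/(m-1)" by (rule sup_le) (use B in auto)
  have s2: "supnorm I2pi (D1 I2pi f) \<le> 4*pi*H" by (rule sup_le) (use B Df in auto)
  have s3: "supnorm I2pi (D2 I2pi f) \<le> 2*H" by (rule sup_le) (use B Df in auto)
  have s4: "supnorm I2pi g \<le> 2*pi*(H + H/(m-1))" by (rule sup_le) (use B in auto)
  have s5: "supnorm I2pi (D1 I2pi g) \<le> H + H/(m-1)" by (rule sup_le) (use B Dg in auto)
  have s6: "supnorm I2pi (D2 I2pi g) \<le> 4*pi*H + Q" by (rule sup_le) (use B Dg in auto)
  define A where "A = (2 + 2*pi)/(m-1) + 10*pi + 3"
  define K where "K = m + 2 + 4*pi"
  have "C2norm I2pi f + C2norm I2pi g \<le> H/(m-1) + 4*pi*H + 2*H + (2*pi*(H + H/(m-1)) + (H + H/(m-1)) + (4*pi*H + Q))"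
    unfolding C2norm_def using s1 s2 s3 s4 s5 s6 by linarith
  also have "\<dots> = (2+2*pi)*(H/(m-1)) + (10*pi+3)*H + Q" by (simp add: algebra_simps)
  also have "\<dots> = H * A + Q"
  proof -
    have "H * ((2 + 2*pi)/(m-1)) = (2+2*pi)*(H/(m-1))" by simp
    then show ?thesis unfolding A_def by (simp add: algebra_simps)
  qed
  also have "\<dots> \<le> (K * (P + Q)) * A + K * (P + Q)"
  proof -
    have A0: "A \<ge> 0" unfolding A_def using m by (simp add: pi_gt_zero less_imp_le)
    have "H \<le> K * (P + Q)" unfolding H_def K_def using P0 Q0 m pi_gt_zero
      by (simp add: algebra_simps)
    then have "H * A \<le> K * (P + Q) * A" using A0 by (rule mult_right_mono)
    moreover have "Q \<le> K * (P + Q)" unfolding K_def using P0 Q0 m pi_gt_zero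
      by (simp add: algebra_simps)
    ultimately show ?thesis by linarith
  qed
  also have "\<dots> = (K * (A + 1)) * (P + Q)" by (simp add: algebra_simps)
  also have "K * (A + 1) = (m + 2 + 4*pi) * ((2 + 2*pi)/(m-1) + 10*pi + 4)" unfolding K_def A_def by simp
  finally show ?thesis unfolding P_def Q_def .
qed

lemma uniq:
  fixes m d :: real and phi vphi f g f' g' :: "real \<Rightarrow> real"
  assumes m: "m > 1" and dd: "d \<ge> m + 2"
  and s1: "is_sol m d phi vphi f g" and s2: "is_sol m d phi vphi f' g'"
  shows "\<forall>x\<in>I2pi. f x = f' x \<and> g x = g' x"
proof -
  obtain f1 f2 g1 g2 where
   df1: "\<forall>x\<in>I2pi. (f has_real_derivative f1 x) (at x within I2pi)"
   and df2: "\<forall>x\<in>I2pi. (f1 has_real_derivative f2 x) (at x within I2pi)"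
   and cf2: "continuous_on I2pi f2"
   and dg1: "\<forall>x\<in>I2pi. (g has_real_derivative g1 x) (at x within I2pi)"
   and dg2: "\<forall>x\<in>I2pi. (g1 has_real_derivative g2 x) (at x within I2pi)"
   and cg2: "continuous_on I2pi g2"
   and E1: "\<forall>x\<in>{0<..<2*pi}. f2 x + (d-m-1) * f x + (d-1) * g1 x = phi x"
   and E2: "\<forall>x\<in>{0<..<2*pi}. (1-d) * f1 x - d * g2 x = vphi x"
   and pf: "f 0 = f (2*pi)" "f1 0 = f1 (2*pi)" and pg: "g 0 = g (2*pi)" "g1 0 = g1 (2*pi)"
   and ig: "integral I2pi g = 0"
   and "\<forall>x\<in>I2pi. D1 I2pi f x = f1 x" "\<forall>x\<in>I2pi. D2 I2pi f x = f2 x"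
   and "\<forall>x\<in>I2pi. D1 I2pi g x = g1 x" "\<forall>x\<in>I2pi. D2 I2pi g x = g2 x"
    by (rule unpack[OF s1])
  obtain f1' f2' g1' g2' where
   df1': "\<forall>x\<in>I2pi. (f' has_real_derivative f1' x) (at x within I2pi)"
   and df2': "\<forall>x\<in>I2pi. (f1' has_real_derivative f2' x) (at x within I2pi)"
   and cf2': "continuous_on I2pi f2'"
   and dg1': "\<forall>x\<in>I2pi. (g' has_real_derivative g1' x) (at x within I2pi)"
   and dg2': "\<forall>x\<in>I2pi. (g1' has_real_derivative g2' x) (at x within I2pi)"
   and cg2': "continuous_on I2pi g2'"
   and E1': "\<forall>x\<in>{0<..<2*pi}. f2' x + (d-m-1) * f' x + (d-1) * g1' x = phi x"
   and E2': "\<forall>x\<in>{0<..<2*pi}. (1-d) * f1' x - d * g2' x = vphi x"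
   and pf': "f' 0 = f' (2*pi)" "f1' 0 = f1' (2*pi)" and pg': "g' 0 = g' (2*pi)" "g1' 0 = g1' (2*pi)"
   and ig': "integral I2pi g' = 0"
   and "\<forall>x\<in>I2pi. D1 I2pi f' x = f1' x" "\<forall>x\<in>I2pi. D2 I2pi f' x = f2' x"
   and "\<forall>x\<in>I2pi. D1 I2pi g' x = g1' x" "\<forall>x\<in>I2pi. D2 I2pi g' x = g2' x"
    by (rule unpack[OF s2])
  have cg: "continuous_on I2pi g" by (rule deriv_cont[OF dg1])
  have cg': "continuous_on I2pi g'" by (rule deriv_cont[OF dg1'])
  have "((\<lambda>x. g x - g' x) has_integral (integral I2pi g - integral I2pi g')) I2pi"
    by (intro has_integral_diff has_int cg cg')
  then have igd: "integral I2pi (\<lambda>x. g x - g' x) = 0" using ig ig' by (simp add: integral_unique)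
  have D1: "\<forall>x\<in>I2pi. ((\<lambda>x. f x - f' x) has_real_derivative f1 x - f1' x) (at x within I2pi)"
    using df1 df1' by (auto intro!: DERIV_diff)
  have D2: "\<forall>x\<in>I2pi. ((\<lambda>x. f1 x - f1' x) has_real_derivative f2 x - f2' x) (at x within I2pi)"
    using df2 df2' by (auto intro!: DERIV_diff)
  have D3: "\<forall>x\<in>I2pi. ((\<lambda>x. g x - g' x) has_real_derivative g1 x - g1' x) (at x within I2pi)"
    using dg1 dg1' by (auto intro!: DERIV_diff)
  have D4: "\<forall>x\<in>I2pi. ((\<lambda>x. g1 x - g1' x) has_real_derivative g2 x - g2' x) (at x within I2pi)"
    using dg2 dg2' by (auto intro!: DERIV_diff)
  have C2: "continuous_on I2pi (\<lambda>x. f2 x - f2' x)" by (intro continuous_intros cf2 cf2')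
  have C4: "continuous_on I2pi (\<lambda>x. g2 x - g2' x)" by (intro continuous_intros cg2 cg2')
  have cz: "continuous_on I2pi (\<lambda>x::real. 0::real)" by simp
  have E1d: "\<forall>x\<in>{0<..<2*pi}. (f2 x - f2' x) + (d-m-1) * (f x - f' x) + (d-1) * (g1 x - g1' x) = 0"
  proof
    fix x assume x: "x \<in> {0<..<2*pi}"
    have "f2 x + (d-m-1) * f x + (d-1) * g1 x = phi x" "f2' x + (d-m-1) * f' x + (d-1) * g1' x = phi x"
      using E1 E1' x by auto
    then show "(f2 x - f2' x) + (d-m-1) * (f x - f' x) + (d-1) * (g1 x - g1' x) = 0"
      by (simp add: algebra_simps)
  qed
  have E2d: "\<forall>x\<in>{0<..<2*pi}. (1-d) * (f1 x - f1' x) - d * (g2 x - g2' x) = 0"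
  proof
    fix x assume x: "x \<in> {0<..<2*pi}"
    have "(1-d) * f1 x - d * g2 x = vphi x" "(1-d) * f1' x - d * g2' x = vphi x"
      using E2 E2' x by auto
    then show "(1-d) * (f1 x - f1' x) - d * (g2 x - g2' x) = 0"
      by (simp add: algebra_simps)
  qed
  have p1: "f 0 - f' 0 = f (2*pi) - f' (2*pi)" using pf pf' by simp
  have p2: "f1 0 - f1' 0 = f1 (2*pi) - f1' (2*pi)" using pf pf' by simp
  have p3: "g 0 - g' 0 = g (2*pi) - g' (2*pi)" using pg pg' by simp
  have p4: "g1 0 - g1' 0 = g1 (2*pi) - g1' (2*pi)" using pg pg' by simp
  have bz: "\<forall>x\<in>I2pi. \<bar>0::real\<bar> \<le> 0" by simp
  have Hz: "(0::real) = (m+2)*0 + 4*pi*0" by simp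
  note B = apriori[OF m dd D1 D2 C2 D3 D4 C4 cz cz E1d E2d p1 p2 p3 p4 igd bz bz Hz]
  then show ?thesis by auto
qed


theorem lemmaA3:
  fixes m :: real
  assumes "m > 1"
  shows "\<exists>D0 > 0. \<exists>C > 0. \<forall>dh \<ge> D0. \<forall>phi vphi :: real \<Rightarrow> real.
    continuous_on UNIV phi \<and> continuous_on UNIV vphi \<and>
    (\<forall>x. phi (x + 2*pi) = phi x) \<and> (\<forall>x. vphi (x + 2*pi) = vphi x) \<and>
    integral I2pi vphi = 0 \<longrightarrow>
      (\<exists>f g. is_sol m dh phi vphi f g) \<and>
      (\<forall>f1 g1 f2 g2. is_sol m dh phi vphi f1 g1 \<and> is_sol m dh phi vphi f2 g2 \<longrightarrow>
          (\<forall>x\<in>I2pi. f1 x = f2 x \<and> g1 x = g2 x)) \<and>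
      (\<forall>f g. is_sol m dh phi vphi f g \<longrightarrow>
          C2norm I2pi f + C2norm I2pi g \<le> C * (supnorm I2pi phi + supnorm I2pi vphi))"
proof -
  define C where "C = (m + 2 + 4*pi) * ((2 + 2*pi)/(m-1) + 10*pi + 4)"
  have C0: "C > 0" unfolding C_def
    using assms pi_gt_zero by (intro mult_pos_pos add_pos_pos divide_pos_pos) auto
  have main: "continuous_on UNIV phi \<and> continuous_on UNIV vphi \<and>
    (\<forall>x. phi (x + 2*pi) = phi x) \<and> (\<forall>x. vphi (x + 2*pi) = vphi x) \<and>
    integral I2pi vphi = 0 \<longrightarrow>
      (\<exists>f g. is_sol m dh phi vphi f g) \<and>
      (\<forall>f1 g1 f2 g2. is_sol m dh phi vphi f1 g1 \<and> is_sol m dh phi vphi f2 g2 \<longrightarrow>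
          (\<forall>x\<in>I2pi. f1 x = f2 x \<and> g1 x = g2 x)) \<and>
      (\<forall>f g. is_sol m dh phi vphi f g \<longrightarrow>
          C2norm I2pi f + C2norm I2pi g \<le> C * (supnorm I2pi phi + supnorm I2pi vphi))"
    if dh: "m + 2 \<le> dh" for dh :: real and phi vphi :: "real \<Rightarrow> real"
  proof
    assume A: "continuous_on UNIV phi \<and> continuous_on UNIV vphi \<and>
      (\<forall>x. phi (x + 2*pi) = phi x) \<and> (\<forall>x. vphi (x + 2*pi) = vphi x) \<and> integral I2pi vphi = 0"
    have cphi: "continuous_on I2pi phi" using A continuous_on_subset by blast
    have cvphi: "continuous_on I2pi vphi" using A continuous_on_subset by blast
    have iv: "integral I2pi vphi = 0" using A by (elim conjE)
    have e: "\<exists>f g. is_sol m dh phi vphi f g" by (rule existence[OF assms dh cphi cvphi iv])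
    have u: "\<forall>f1 g1 f2 g2. is_sol m dh phi vphi f1 g1 \<and> is_sol m dh phi vphi f2 g2 \<longrightarrow>
          (\<forall>x\<in>I2pi. f1 x = f2 x \<and> g1 x = g2 x)"
    proof (intro allI impI)
      fix f1 g1 f2 g2 assume "is_sol m dh phi vphi f1 g1 \<and> is_sol m dh phi vphi f2 g2"
      then show "\<forall>x\<in>I2pi. f1 x = f2 x \<and> g1 x = g2 x" using uniq[OF assms dh] by (elim conjE)
    qed
    have b: "\<forall>f g. is_sol m dh phi vphi f g \<longrightarrow>
          C2norm I2pi f + C2norm I2pi g \<le> C * (supnorm I2pi phi + supnorm I2pi vphi)"
    proof (intro allI impI)
      fix f g assume "is_sol m dh phi vphi f g"
      then show "C2norm I2pi f + C2norm I2pi g \<le> C * (supnorm I2pi phi + supnorm I2pi vphi)"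
        unfolding C_def by (rule estimate[OF assms dh cphi cvphi])
    qed
    show "(\<exists>f g. is_sol m dh phi vphi f g) \<and>
      (\<forall>f1 g1 f2 g2. is_sol m dh phi vphi f1 g1 \<and> is_sol m dh phi vphi f2 g2 \<longrightarrow>
          (\<forall>x\<in>I2pi. f1 x = f2 x \<and> g1 x = g2 x)) \<and>
      (\<forall>f g. is_sol m dh phi vphi f g \<longrightarrow>
          C2norm I2pi f + C2norm I2pi g \<le> C * (supnorm I2pi phi + supnorm I2pi vphi))"
      using e u b by (intro conjI)
  qed
  have "m + 2 > 0" using assms by simp
  then show ?thesis
    apply -
    apply (rule exI[of _ "m + 2"])
    apply (rule conjI, assumption)
    apply (rule exI[of _ C])
    apply (rule conjI, rule C0)
    apply (intro allI impI)
    apply (rule mp[OF main])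
     apply assumption+
    done
qed

end
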